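(* Let $P$ be a finite poset with height function $h$ and a unique minimum $\hat{0}$. Then $$\mathsf{Z}_{P,h}([0]_q)=q^{-h(\hat{0})}\big(1-\chi_{P\setminus\{\hat{0}\}}\big),$$ where $\chi_R=\sum_{k\ge1}(-1)^{k-1}\#\operatorname{Ch}_k(R)$ (so $\chi_\emptyset=0$). In particular, if $P$ also has a unique maximum $\hat{1}\neq\hat{0}$, then $\mathsf{Z}_{P,h}([0]_q)=0$.
   Context: $q$ is an indeterminate; $[n]_q=(q^n-1)/(q-1)$ (so $[0]_q=0$). A height function is $h:P\to\mathbb{N}$ with $h(x)<h(y)$ whenever $y$ covers $x$. $\operatorname{Ch}_k(R)$ is the set of strict chains $c_1<\cdots<c_k$ in $R$. For a tuple $a$ of $k$ distinct nonnegative integers, $\mathsf{E}_a\in\mathbb{Q}(q)[x]$ is the unique polynomial with $\mathsf{E}_a([n]_q)=\sum_{m\in\mathbb{N}^k,\sum m_i=n}q^{\sum a_im_i}$ for $n\ge0$. The $q$-Zeta polynomial is $\mathsf{Z}_{P,h}(x)=\sum_{k\ge1}\sum_{c\in\operatorname{Ch}_k(P)}q^{\sum_i h(c_i)}\mathsf{E}_{(h(c_1),\dots,h(c_k))}((x-[k+1]_q)/q^{k+1})$; it is the unique polynomial with $\mathsf{Z}_{P,h}([n]_q)=\sum_{e_1\le\cdots\le e_{n-1}}q^{\sum_j h(e_j)}$ for all $n\ge2$. *)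

theory Defs
  imports "HOL-Computational_Algebra.Polynomial" "HOL-Computational_Algebra.Fraction_Field"
begin

type_synonym qfield = "rat poly fract"

definition qvar :: qfield where
  "qvar = Fract [:0, 1:] 1"

definition qint :: "nat \<Rightarrow> qfield" where
  "qint n = (qvar ^ n - 1) / (qvar - 1)"

definition Epoly :: "nat list \<Rightarrow> qfield poly" where
  "Epoly a = (THE p. \<forall>n. poly p (qint n) =
      (\<Sum>m\<in>{m :: nat list. length m = length a \<and> sum_list m = n}.
          qvar ^ (\<Sum>i<length a. a ! i * m ! i)))"

text \<open>Posets are finite subsets of a type of class order, with the induced order.\<close>
definition covers :: "'a::order set \<Rightarrow> 'a \<Rightarrow> 'a \<Rightarrow> bool" where
  "covers P x y \<longleftrightarrow> x \<in> P \<and> y \<in> P \<and> x < y \<and> \<not> (\<exists>z\<in>P. x < z \<and> z < y)"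

definition height_fun :: "'a::order set \<Rightarrow> ('a \<Rightarrow> nat) \<Rightarrow> bool" where
  "height_fun P h \<longleftrightarrow> (\<forall>x y. covers P x y \<longrightarrow> h x < h y)"

definition chains :: "nat \<Rightarrow> 'a::order set \<Rightarrow> 'a list set" where
  "chains k R = {c. length c = k \<and> sorted_wrt (<) c \<and> set c \<subseteq> R}"

definition qZeta :: "'a::order set \<Rightarrow> ('a \<Rightarrow> nat) \<Rightarrow> qfield poly" where
  "qZeta P h = (\<Sum>k\<in>{1..card P}. \<Sum>c\<in>chains k P.
      smult (qvar ^ (\<Sum>i<k. h (c ! i)))
        (pcompose (Epoly (map h c))
           [: - qint (k + 1) / qvar ^ (k + 1), 1 / qvar ^ (k + 1) :]))"

definition chi :: "'a::order set \<Rightarrow> int" where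
  "chi R = (\<Sum>k\<in>{1..card R}. (-1) ^ (k - 1) * int (card (chains k R)))"

end

theory Submission
  imports Defs
begin


definition Dsum :: "('b \<Rightarrow> 'f::field) \<Rightarrow> 'b set \<Rightarrow> ('b \<Rightarrow> 'f) \<Rightarrow> 'f" where
 "Dsum x A f = (\<Sum>e\<in>A. f e / (\<Prod>e'\<in>A-{e}. (x e - x e')))"

lemma Dsum_R1:
  assumes fin: "finite A" and inj: "inj_on x A" and b: "b \<in> A"
  shows "Dsum x A (\<lambda>e. x e * f e) - x b * Dsum x A f = Dsum x (A-{b}) f"
proof -
  have "Dsum x A (\<lambda>e. x e * f e) - x b * Dsum x A f
      = (\<Sum>e\<in>A. (x e - x b) * f e / (\<Prod>e'\<in>A-{e}. (x e - x e')))"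
    unfolding Dsum_def by (simp add: sum_distrib_left sum_subtractf[symmetric] algebra_simps diff_divide_distrib)
  also have "\<dots> = (\<Sum>e\<in>A-{b}. (x e - x b) * f e / (\<Prod>e'\<in>A-{e}. (x e - x e')))"
    using sum.remove[OF fin b, of "\<lambda>e. (x e - x b) * f e / (\<Prod>e'\<in>A-{e}. (x e - x e'))"] by simp
  also have "\<dots> = (\<Sum>e\<in>A-{b}. f e / (\<Prod>e'\<in>(A-{b})-{e}. (x e - x e')))"
  proof (rule sum.cong[OF refl])
    fix e assume e: "e \<in> A - {b}"
    have ne: "x e - x b \<noteq> 0" using inj e b by (auto dest: inj_onD)
    have "(\<Prod>e'\<in>A-{e}. (x e - x e')) = (x e - x b) * (\<Prod>e'\<in>(A-{e})-{b}. (x e - x e'))"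
      using prod.remove[of "A-{e}" b] fin e b by auto
    also have "(A-{e})-{b} = (A-{b})-{e}" by auto
    finally show "(x e - x b) * f e / (\<Prod>e'\<in>A-{e}. (x e - x e')) = f e / (\<Prod>e'\<in>(A-{b})-{e}. (x e - x e'))"
      using ne by simp
  qed
  finally show ?thesis unfolding Dsum_def .
qed

lemma Dsum_R2:
  assumes fin: "finite A" and inj: "inj_on x A" and b: "b \<in> A" and c: "c \<in> A"
  shows "(x c - x b) * Dsum x A f = Dsum x (A-{b}) f - Dsum x (A-{c}) f"
  using Dsum_R1[OF fin inj b, of f] Dsum_R1[OF fin inj c, of f] by (simp add: algebra_simps)

lemma Dsum_A:
  assumes "card A = Suc k" and "inj_on x A"
  shows "(\<forall>m<k. Dsum x A (\<lambda>e. x e ^ m) = 0) \<and> Dsum x A (\<lambda>e. x e ^ k) = 1"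
  using assms
proof (induction k arbitrary: A)
  case 0
  then have "card A = 1" by simp
  then obtain b where "A = {b}" by (rule card_1_singletonE)
  then show ?case by (simp add: Dsum_def)
next
  case (Suc k)
  have fin: "finite A" using Suc.prems(1) by (intro card_ge_0_finite) simp
  obtain b where b: "b \<in> A" "card (A-{b}) = Suc k"
  proof -
    have "A \<noteq> {}" using Suc.prems(1) by auto
    then obtain b where "b \<in> A" by blast
    moreover have "card (A-{b}) = Suc k" using Suc.prems(1) fin \<open>b \<in> A\<close> by simp
    ultimately show ?thesis using that by blast
  qed
  obtain c where c: "c \<in> A - {b}"
  proof -
    have "A - {b} \<noteq> {}" using b(2) by (intro notI) simp
    then show ?thesis using that by blast
  qed
  have bc: "b \<in> A" "c \<in> A" "b \<noteq> c" using b c by auto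
  have cc: "card (A-{c}) = Suc k" using Suc.prems(1) fin bc(2) by simp
  have ib: "inj_on x (A-{b})" "inj_on x (A-{c})" using Suc.prems(2) by (auto intro: inj_on_subset)
  note IHb = Suc.IH[OF b(2) ib(1)] and IHc = Suc.IH[OF cc ib(2)]
  have ne: "x c - x b \<noteq> 0" using Suc.prems(2) bc by (auto dest: inj_onD)
  have z: "Dsum x A (\<lambda>e. x e ^ m) = 0" if "m < Suc k" for m
  proof -
    have "Dsum x (A-{b}) (\<lambda>e. x e ^ m) = Dsum x (A-{c}) (\<lambda>e. x e ^ m)"
    proof (cases "m < k")
      case True then show ?thesis using IHb IHc by simp
    next
      case False then have "m = k" using that by simp
      then show ?thesis using IHb IHc by simp
    qed
    then have "(x c - x b) * Dsum x A (\<lambda>e. x e ^ m) = 0"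
      using Dsum_R2[OF fin Suc.prems(2) bc(1,2)] by simp
    then show ?thesis using ne by simp
  qed
  have "Dsum x A (\<lambda>e. x e * x e ^ k) - x b * Dsum x A (\<lambda>e. x e ^ k) = Dsum x (A-{b}) (\<lambda>e. x e ^ k)"
    by (rule Dsum_R1[OF fin Suc.prems(2) bc(1)])
  moreover have "Dsum x A (\<lambda>e. x e ^ k) = 0" using z by simp
  moreover have "Dsum x (A-{b}) (\<lambda>e. x e ^ k) = 1" using IHb by blast
  ultimately have "Dsum x A (\<lambda>e. x e ^ Suc k) = 1" by simp
  then show ?case using z by blast
qed

lemma card_two_elems:
  assumes "card A = Suc (Suc k)"
  obtains b where "b \<in> A" "card (A-{b}) = Suc k"
proof -
  have fin: "finite A" using assms by (intro card_ge_0_finite) simp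
  have "A \<noteq> {}" using assms by auto
  then obtain b where "b \<in> A" by blast
  moreover have "card (A-{b}) = Suc k" using assms fin \<open>b \<in> A\<close> by simp
  ultimately show ?thesis using that by blast
qed

lemma Dsum_B:
  assumes "card A = Suc k" and "inj_on x A" and "\<forall>e\<in>A. x e \<noteq> 0"
  shows "Dsum x A (\<lambda>e. inverse (x e)) = (-1)^k * (\<Prod>e\<in>A. inverse (x e))"
  using assms
proof (induction k arbitrary: A)
  case 0
  then have "card A = 1" by simp
  then obtain b where "A = {b}" by (rule card_1_singletonE)
  then show ?case by (simp add: Dsum_def)
next
  case (Suc k)
  have fin: "finite A" using Suc.prems(1) by (intro card_ge_0_finite) simp
  obtain b where b: "b \<in> A" "card (A-{b}) = Suc k" using card_two_elems[OF Suc.prems(1)] by blast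
  have ib: "inj_on x (A-{b})" using Suc.prems(2) by (auto intro: inj_on_subset)
  note IH = Suc.IH[OF b(2) ib] 
  have 0: "Dsum x A (\<lambda>e. x e ^ 0) = 0" using Dsum_A[OF Suc.prems(1,2)] by blast
  have "Dsum x A (\<lambda>e. x e * inverse (x e)) - x b * Dsum x A (\<lambda>e. inverse (x e)) = Dsum x (A-{b}) (\<lambda>e. inverse (x e))"
    by (rule Dsum_R1[OF fin Suc.prems(2) b(1)])
  moreover have "Dsum x A (\<lambda>e. x e * inverse (x e)) = Dsum x A (\<lambda>e. x e ^ 0)"
    unfolding Dsum_def using Suc.prems(3) by (intro sum.cong) auto
  ultimately have "- x b * Dsum x A (\<lambda>e. inverse (x e)) = (-1)^k * (\<Prod>e\<in>A-{b}. inverse (x e))"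
    using 0 IH Suc.prems(3) by simp
  then have h: "x b * Dsum x A (\<lambda>e. inverse (x e)) = - ((-1)^k * (\<Prod>e\<in>A-{b}. inverse (x e)))"
    by (metis minus_equation_iff mult_minus_left)
  have xb: "x b \<noteq> 0" using Suc.prems(3) b(1) by auto
  have "Dsum x A (\<lambda>e. inverse (x e)) = inverse (x b) * (x b * Dsum x A (\<lambda>e. inverse (x e)))"
    using xb by simp
  also have "\<dots> = (-1)^Suc k * (inverse (x b) * (\<Prod>e\<in>A-{b}. inverse (x e)))"
    unfolding h by simp
  also have "inverse (x b) * (\<Prod>e\<in>A-{b}. inverse (x e)) = (\<Prod>e\<in>A. inverse (x e))"
    by (rule prod.remove[OF fin b(1), symmetric])
  finally show ?case by simp
qed

lemma Dsum_C:
  assumes "card A = Suc k" and "inj_on x A" and "\<forall>e\<in>A. x e \<noteq> 0"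
  shows "Dsum x A (\<lambda>e. inverse (x e) ^ 2) = (-1)^k * (\<Prod>e\<in>A. inverse (x e)) * (\<Sum>e\<in>A. inverse (x e))"
  using assms
proof (induction k arbitrary: A)
  case 0
  then have "card A = 1" by simp
  then obtain b where "A = {b}" by (rule card_1_singletonE)
  then show ?case by (simp add: Dsum_def power2_eq_square)
next
  case (Suc k)
  have fin: "finite A" using Suc.prems(1) by (intro card_ge_0_finite) simp
  obtain b where b: "b \<in> A" "card (A-{b}) = Suc k" using card_two_elems[OF Suc.prems(1)] by blast
  have ib: "inj_on x (A-{b})" using Suc.prems(2) by (auto intro: inj_on_subset)
  note IH = Suc.IH[OF b(2) ib] 
  have B: "Dsum x A (\<lambda>e. inverse (x e)) = (-1)^Suc k * (\<Prod>e\<in>A. inverse (x e))"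
    using Dsum_B[OF Suc.prems] .
  have "Dsum x A (\<lambda>e. x e * inverse (x e) ^ 2) - x b * Dsum x A (\<lambda>e. inverse (x e) ^ 2) = Dsum x (A-{b}) (\<lambda>e. inverse (x e) ^ 2)"
    by (rule Dsum_R1[OF fin Suc.prems(2) b(1)])
  moreover have "Dsum x A (\<lambda>e. x e * inverse (x e) ^ 2) = Dsum x A (\<lambda>e. inverse (x e))"
    unfolding Dsum_def using Suc.prems(3) by (intro sum.cong) (auto simp: power2_eq_square)
  ultimately have eq: "x b * Dsum x A (\<lambda>e. inverse (x e) ^ 2) = (-1)^Suc k * (\<Prod>e\<in>A. inverse (x e))
      - (-1)^k * (\<Prod>e\<in>A-{b}. inverse (x e)) * (\<Sum>e\<in>A-{b}. inverse (x e))"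
    using B IH Suc.prems(3) by (simp add: algebra_simps)
  have P: "(\<Prod>e\<in>A. inverse (x e)) = inverse (x b) * (\<Prod>e\<in>A-{b}. inverse (x e))"
    using prod.remove[OF fin b(1)] by simp
  have S: "(\<Sum>e\<in>A. inverse (x e)) = inverse (x b) + (\<Sum>e\<in>A-{b}. inverse (x e))"
    using sum.remove[OF fin b(1)] by simp
  have xb: "x b \<noteq> 0" using Suc.prems(3) b(1) by auto
  from eq xb show ?case unfolding P S by (simp add: field_simps)
qed

lemma Dsum_L:
  assumes fin: "finite A" and inj: "inj_on x A" and b: "b \<in> A" and c: "card (A-{b}) = Suc k"
  shows "Dsum x A (\<lambda>e. x e ^ (n + Suc k)) = (\<Sum>j\<le>n. x b ^ j * Dsum x (A-{b}) (\<lambda>e. x e ^ (n - j + k)))"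
proof (induction n)
  case 0
  have cA: "card A = Suc (Suc k)" using c card_Suc_Diff1[OF fin b] by simp
  have ib: "inj_on x (A-{b})" using inj by (auto intro: inj_on_subset)
  have "Dsum x A (\<lambda>e. x e ^ Suc k) = 1" using Dsum_A[OF cA inj] by blast
  moreover have "Dsum x (A-{b}) (\<lambda>e. x e ^ k) = 1" using Dsum_A[OF c ib] by blast
  ultimately show ?case by simp
next
  case (Suc n)
  have "Dsum x A (\<lambda>e. x e * x e ^ (n + Suc k)) - x b * Dsum x A (\<lambda>e. x e ^ (n + Suc k)) = Dsum x (A-{b}) (\<lambda>e. x e ^ (n + Suc k))"
    by (rule Dsum_R1[OF fin inj b])
  then have "Dsum x A (\<lambda>e. x e ^ (Suc n + Suc k)) = Dsum x (A-{b}) (\<lambda>e. x e ^ (Suc n + k)) + x b * Dsum x A (\<lambda>e. x e ^ (n + Suc k))"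
    by (simp add: algebra_simps)
  also have "\<dots> = Dsum x (A-{b}) (\<lambda>e. x e ^ (Suc n + k)) + (\<Sum>j\<le>n. x b ^ Suc j * Dsum x (A-{b}) (\<lambda>e. x e ^ (n - j + k)))"
    unfolding Suc.IH by (simp add: sum_distrib_left mult.assoc)
  also have "\<dots> = (\<Sum>j\<le>Suc n. x b ^ j * Dsum x (A-{b}) (\<lambda>e. x e ^ (Suc n - j + k)))"
    by (subst sum.atMost_Suc_shift) simp
  finally show ?case .
qed

definition Sfun :: "nat list \<Rightarrow> nat \<Rightarrow> qfield" where
  "Sfun a n = (\<Sum>m\<in>{m :: nat list. length m = length a \<and> sum_list m = n}.
          qvar ^ (\<Sum>i<length a. a ! i * m ! i))"

lemma finite_sumlists: "finite {m :: nat list. length m = L \<and> sum_list m = N}"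
proof (rule finite_subset[OF _ finite_lists_length_eq[of "{..N}" L]])
  show "{m :: nat list. length m = L \<and> sum_list m = N} \<subseteq> {xs. set xs \<subseteq> {..N} \<and> length xs = L}"
    using member_le_sum_list by fastforce
qed simp

lemma Sfun_single: "Sfun [b] n = qvar ^ (b * n)"
proof -
  have "{m :: nat list. length m = length [b] \<and> sum_list m = n} = {[n]}"
    by (auto simp: length_Suc_conv)
  then show ?thesis unfolding Sfun_def by simp
qed

lemma Sfun_cons: "Sfun (b # a) n = (\<Sum>j\<le>n. qvar ^ (b * j) * Sfun a (n - j))"
proof -
  let ?F = "\<lambda>(j, m'). (j # m' :: nat list)"
  let ?T = "SIGMA j:{..n}. {m' :: nat list. length m' = length a \<and> sum_list m' = n - j}"
  have eq: "{m :: nat list. length m = length (b # a) \<and> sum_list m = n} = ?F ` ?T"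
  proof
    show "?F ` ?T \<subseteq> {m. length m = length (b # a) \<and> sum_list m = n}" by auto
    show "{m. length m = length (b # a) \<and> sum_list m = n} \<subseteq> ?F ` ?T"
    proof
      fix m assume "m \<in> {m. length m = length (b # a) \<and> sum_list m = n}"
      then obtain j m' where "m = j # m'" "length m' = length a" "j + sum_list m' = n"
        by (auto simp: length_Suc_conv)
      then show "m \<in> ?F ` ?T" by (auto intro!: image_eqI[of _ _ "(j, m')"])
    qed
  qed
  have inj: "inj_on ?F ?T" by (auto simp: inj_on_def)
  have "Sfun (b # a) n = (\<Sum>p\<in>?T. qvar ^ (\<Sum>i<length (b # a). (b # a) ! i * (?F p) ! i))"
    unfolding Sfun_def eq by (subst sum.reindex[OF inj]) (simp add: comp_def)
  also have "\<dots> = (\<Sum>(j,m')\<in>?T. qvar ^ (b * j) * qvar ^ (\<Sum>i<length a. a ! i * m' ! i))"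
  proof (intro sum.cong refl)
    fix p assume "p \<in> ?T"
    obtain j m' where p: "p = (j, m')" by fastforce
    have "(\<Sum>i<length (b # a). (b # a) ! i * (j # m') ! i) = b*j + (\<Sum>i<length a. a ! i * m' ! i)"
      unfolding length_Cons by (subst sum.lessThan_Suc_shift) simp
    then show "qvar ^ (\<Sum>i<length (b # a). (b # a) ! i * (?F p) ! i) =
      (case p of (j,m') \<Rightarrow> qvar ^ (b * j) * qvar ^ (\<Sum>i<length a. a ! i * m' ! i))"
      unfolding p by (simp only: prod.case power_add)
  qed
  also have "\<dots> = (\<Sum>j\<le>n. \<Sum>m'\<in>{m'. length m' = length a \<and> sum_list m' = n - j}.
        qvar ^ (b * j) * qvar ^ (\<Sum>i<length a. a ! i * m' ! i))"
    by (rule sum.Sigma[symmetric]) (auto simp: finite_sumlists)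
  also have "\<dots> = (\<Sum>j\<le>n. qvar ^ (b * j) * Sfun a (n - j))"
    unfolding Sfun_def by (simp add: sum_distrib_left)
  finally show ?thesis .
qed

lemma qvar_pow: "qvar ^ n = Fract (monom 1 n) 1"
proof (induction n)
  case 0 then show ?case by (simp add: One_fract_def monom_0 one_pCons)
next
  case (Suc n)
  have "[:0, 1:] = (monom 1 1 :: rat poly)" by (simp add: monom_Suc monom_0)
  then show ?case using Suc by (simp add: qvar_def mult_monom)
qed

lemma qvar_pow_inj: "qvar ^ m = qvar ^ n \<longleftrightarrow> m = n"
proof
  assume "qvar ^ m = qvar ^ n"
  then have "monom (1::rat) m = monom 1 n" unfolding qvar_pow by (simp add: eq_fract)
  then show "m = n" by (simp add: monom_eq_iff')
qed simp

lemma qvar_nz: "qvar \<noteq> 0"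
proof
  assume "qvar = 0"
  then have "qvar ^ 1 = qvar ^ 2" by simp
  then show False unfolding qvar_pow_inj by simp
qed

lemma qvar_ne1: "qvar - 1 \<noteq> 0"
proof
  assume "qvar - 1 = 0"
  then have "qvar ^ 1 = qvar ^ 0" by simp
  then show False unfolding qvar_pow_inj by simp
qed

lemma qint_inj: "inj qint"
proof (rule injI)
  fix m n assume "qint m = qint n"
  then have "qvar ^ m - 1 = qvar ^ n - 1" unfolding qint_def using qvar_ne1 by (simp add: divide_cancel_right)
  then show "m = n" using qvar_pow_inj by simp
qed

lemma poly_lin_qint: "poly [:1, qvar - 1:] (qint n) = qvar ^ n"
  unfolding qint_def using qvar_ne1 by simp

lemma poly_eq_on_qint:
  fixes p r :: "qfield poly"
  assumes "\<And>n. poly p (qint n) = poly r (qint n)"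
  shows "p = r"
proof (rule ccontr)
  assume "p \<noteq> r"
  then have "p - r \<noteq> 0" by simp
  then have "finite {x. poly (p - r) x = 0}" by (rule poly_roots_finite)
  moreover have "range qint \<subseteq> {x. poly (p - r) x = 0}" using assms by auto
  ultimately have "finite (range qint)" by (rule finite_subset[rotated])
  then show False using qint_inj finite_imageD by (metis infinite_UNIV_nat)
qed

abbreviation qx :: "nat \<Rightarrow> qfield" where "qx e \<equiv> qvar ^ e"

lemma inj_qx: "inj_on qx A"
  by (auto simp: inj_on_def qvar_pow_inj)

lemma Sfun_Dsum:
  assumes "distinct a" "a \<noteq> []"
  shows "Sfun a n = Dsum qx (set a) (\<lambda>e. qx e ^ (n + length a - 1))"
  using assms
proof (induction a arbitrary: n)
  case Nil then show ?case by simp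
next
  case (Cons b a)
  show ?case
  proof (cases "a = []")
    case True
    then show ?thesis by (simp add: Sfun_single Dsum_def power_mult mult.commute)
  next
    case False
    then obtain k where k: "length a = Suc k" by (cases a) auto
    have da: "distinct a" "b \<notin> set a" using Cons.prems by auto
    have sa: "set (b # a) - {b} = set a" using da by auto
    have ca: "card (set (b # a) - {b}) = Suc k" unfolding sa using k da distinct_card by metis
    have "Sfun (b # a) n = (\<Sum>j\<le>n. qvar ^ (b * j) * Sfun a (n - j))" by (rule Sfun_cons)
    also have "\<dots> = (\<Sum>j\<le>n. qx b ^ j * Dsum qx (set (b#a) - {b}) (\<lambda>e. qx e ^ (n - j + k)))"
      using Cons.IH[OF da(1) False] k sa by (simp add: power_mult)
    also have "\<dots> = Dsum qx (set (b # a)) (\<lambda>e. qx e ^ (n + Suc k))"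
      by (rule Dsum_L[OF _ inj_qx _ ca, symmetric]) auto
    finally show ?thesis using k by simp
  qed
qed

definition Eexp :: "nat list \<Rightarrow> qfield poly" where
  "Eexp a = (\<Sum>e\<in>set a. smult (qx e ^ (length a - 1) / (\<Prod>e'\<in>set a - {e}. (qx e - qx e')))
      ([:1, qvar - 1:] ^ e))"

lemma poly_Eexp: "poly (Eexp a) y = Dsum qx (set a) (\<lambda>e. qx e ^ (length a - 1) * poly [:1, qvar - 1:] y ^ e)"
  unfolding Eexp_def Dsum_def by (simp add: poly_sum)

lemma Epoly_eq:
  assumes "distinct a" "a \<noteq> []"
  shows "Epoly a = Eexp a"
  unfolding Epoly_def
proof (rule the_equality)
  have "poly (Eexp a) (qint n) = Sfun a n" for n
  proof -
    have "poly (Eexp a) (qint n) = Dsum qx (set a) (\<lambda>e. qx e ^ (n + length a - 1))"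
      unfolding poly_Eexp poly_lin_qint Dsum_def
    proof (intro sum.cong refl)
      fix e
      have L: "n + length a - 1 = n + (length a - 1)" using assms by (cases a) auto
      show "qx e ^ (length a - 1) * (qvar ^ n) ^ e / (\<Prod>e'\<in>set a - {e}. qx e - qx e') =
         qx e ^ (n + length a - 1) / (\<Prod>e'\<in>set a - {e}. qx e - qx e')"
        unfolding L by (simp add: power_add power_mult[symmetric] mult.commute)
    qed
    then show ?thesis using Sfun_Dsum[OF assms] by simp
  qed
  then show "\<forall>n. poly (Eexp a) (qint n) = (\<Sum>m\<in>{m. length m = length a \<and> sum_list m = n}. qvar ^ (\<Sum>i<length a. a ! i * m ! i))"
    unfolding Sfun_def by simp
  fix p assume "\<forall>n. poly p (qint n) = (\<Sum>m\<in>{m. length m = length a \<and> sum_list m = n}. qvar ^ (\<Sum>i<length a. a ! i * m ! i))"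
  then show "p = Eexp a" using \<open>\<And>n. poly (Eexp a) (qint n) = Sfun a n\<close>
    by (intro poly_eq_on_qint) (simp add: Sfun_def)
qed

lemma lin_at_point:
  "poly [:1, qvar - 1:] (poly [: - qint (k + 1) / qvar ^ (k + 1), 1 / qvar ^ (k + 1) :] 0) = inverse (qvar ^ (k+1))"
proof -
  have "poly [:1, qvar - 1:] (poly [: - qint (k + 1) / qvar ^ (k + 1), 1 / qvar ^ (k + 1) :] 0)
     = 1 + (- qint (k + 1) / qvar ^ (k + 1)) * (qvar - 1)" by simp
  also have "\<dots> = inverse (qvar ^ (k+1))"
    unfolding qint_def using qvar_nz qvar_ne1 by (simp add: field_simps)
  finally show ?thesis .
qed

lemma pow_inv_cancel:
  fixes x :: "'f::field"
  assumes "x \<noteq> 0" "k \<ge> 1"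
  shows "x ^ (k - 1) * inverse x ^ (k + 1) = inverse x ^ 2"
proof -
  have "k + 1 = (k - 1) + 2" using assms by simp
  then have "x ^ (k - 1) * inverse x ^ (k + 1) = (x * inverse x) ^ (k - 1) * inverse x ^ 2"
    by (simp only: power_add power_mult_distrib mult.assoc)
  then show ?thesis using assms by simp
qed

lemma Epoly_at_point:
  assumes "distinct a" "a \<noteq> []" "k = length a"
  shows "qvar ^ (sum_list a) * poly (Epoly a) (poly [: - qint (k + 1) / qvar ^ (k + 1), 1 / qvar ^ (k + 1) :] 0)
     = (-1)^(k-1) * (\<Sum>e\<in>set a. inverse (qx e))"
proof -
  have k1: "k \<ge> 1" using assms by (cases a) auto
  have card: "card (set a) = Suc (k - 1)" using assms k1 distinct_card by fastforce
  have nz: "\<forall>e\<in>set a. qx e \<noteq> 0" using qvar_nz by simp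
  have "poly (Epoly a) (poly [: - qint (k + 1) / qvar ^ (k + 1), 1 / qvar ^ (k + 1) :] 0)
      = Dsum qx (set a) (\<lambda>e. inverse (qx e) ^ 2)"
    unfolding Epoly_eq[OF assms(1,2)] poly_Eexp lin_at_point Dsum_def
  proof (intro sum.cong refl)
    fix e
    have "inverse (qvar ^ (k + 1)) ^ e = inverse ((qvar ^ (k + 1)) ^ e)" by (rule power_inverse)
    also have "(qvar ^ (k + 1)) ^ e = (qvar ^ e) ^ (k + 1)" by (simp only: power_mult[symmetric] mult.commute)
    also have "inverse ((qvar ^ e) ^ (k + 1)) = inverse (qx e) ^ (k + 1)" by (rule power_inverse[symmetric])
    finally have "inverse (qvar ^ (k + 1)) ^ e = inverse (qx e) ^ (k + 1)" .
    then show "qx e ^ (length a - 1) * inverse (qvar ^ (k + 1)) ^ e / (\<Prod>e'\<in>set a - {e}. qx e - qx e') =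
         inverse (qx e) ^ 2 / (\<Prod>e'\<in>set a - {e}. qx e - qx e')"
      using pow_inv_cancel[of "qx e" k] qvar_nz k1 assms(3) by simp
  qed
  also have "\<dots> = (-1)^(k-1) * (\<Prod>e\<in>set a. inverse (qx e)) * (\<Sum>e\<in>set a. inverse (qx e))"
    by (rule Dsum_C[OF card inj_qx nz])
  finally have E: "poly (Epoly a) (poly [: - qint (k + 1) / qvar ^ (k + 1), 1 / qvar ^ (k + 1) :] 0) =
     (-1)^(k-1) * (\<Prod>e\<in>set a. inverse (qx e)) * (\<Sum>e\<in>set a. inverse (qx e))" .
  have S: "qvar ^ (sum_list a) = (\<Prod>e\<in>set a. qx e)"
    using sum_list_distinct_conv_sum_set[OF assms(1), of id] by (simp add: power_sum)
  have P: "(\<Prod>e\<in>set a. qx e) * (\<Prod>e\<in>set a. inverse (qx e)) = 1"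
    using nz by (simp add: prod.distrib[symmetric])
  show ?thesis unfolding E S using P by (simp add: algebra_simps)
qed



definition Chs :: "'a::order set \<Rightarrow> 'a list set" where
  "Chs R = {c. sorted_wrt (<) c \<and> set c \<subseteq> R}"

lemma sorted_less_distinct: "sorted_wrt ((<) :: 'a::order \<Rightarrow> _) c \<Longrightarrow> distinct c"
  by (induction c) auto

lemma Chs_length: "finite R \<Longrightarrow> c \<in> Chs R \<Longrightarrow> length c \<le> card R"
proof -
  assume R: "finite R" and c: "c \<in> Chs R"
  then have "distinct c" "set c \<subseteq> R" unfolding Chs_def using sorted_less_distinct by auto
  then have "card (set c) = length c" "card (set c) \<le> card R" using R
    by (simp add: distinct_card, intro card_mono) auto
  then show ?thesis by simp
qed

lemma finite_Chs: "finite R \<Longrightarrow> finite (Chs R)"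
proof -
  assume R: "finite R"
  have "Chs R \<subseteq> {xs. set xs \<subseteq> R \<and> length xs \<le> card R}"
    using Chs_length[OF R] by (auto simp: Chs_def)
  then show ?thesis using finite_lists_length_le[OF R] by (rule finite_subset)
qed

lemma chains_eq: "chains k R = {c. c \<in> Chs R \<and> length c = k}"
  unfolding chains_def Chs_def by auto

lemma sum_chains_len:
  assumes "finite R"
  shows "(\<Sum>k\<in>{0..card R}. \<Sum>c\<in>chains k R. g c) = (\<Sum>c\<in>Chs R. g c)"
  unfolding chains_eq
  by (rule sum.group[OF finite_Chs[OF assms]]) (auto dest: Chs_length[OF assms])

lemma chains0: "chains 0 R = {[]}"
  unfolding chains_def by auto

lemma sign_sum_chi:
  assumes "finite R"
  shows "(\<Sum>c\<in>Chs R. (-1::int) ^ length c) = 1 - chi R"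
proof -
  have "(\<Sum>c\<in>Chs R. (-1::int) ^ length c) = (\<Sum>k\<in>{0..card R}. \<Sum>c\<in>chains k R. (-1::int) ^ length c)"
    by (rule sum_chains_len[OF assms, symmetric])
  also have "\<dots> = (\<Sum>k\<in>{0..card R}. (-1::int) ^ k * int (card (chains k R)))"
    by (intro sum.cong refl) (simp add: chains_def)
  also have "\<dots> = 1 + (\<Sum>k\<in>{1..card R}. (-1::int) ^ k * int (card (chains k R)))"
    by (subst sum.atLeast_Suc_atMost) (simp_all add: chains0)
  also have "(\<Sum>k\<in>{1..card R}. (-1::int) ^ k * int (card (chains k R)))
      = (\<Sum>k\<in>{1..card R}. - ((-1::int) ^ (k - 1) * int (card (chains k R))))"
  proof (intro sum.cong refl)
    fix k assume "k \<in> {1..card R}"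
    then obtain j where "k = Suc j" by (cases k) auto
    then show "(-1::int) ^ k * int (card (chains k R)) = - ((-1) ^ (k - 1) * int (card (chains k R)))" by simp
  qed
  finally show ?thesis unfolding chi_def by (simp add: sum_negf)
qed

lemma Cons_min_image:
  assumes z: "\<forall>y\<in>R. z \<le> y" "z \<in> R" and Q: "\<And>c. Q (z # c) = Q c"
  shows "{c \<in> Chs R. Q c \<and> z \<in> set c} = (Cons z) ` {c \<in> Chs R. Q c \<and> z \<notin> set c}"
proof (rule equalityI)
  show "(Cons z) ` {c \<in> Chs R. Q c \<and> z \<notin> set c} \<subseteq> {c \<in> Chs R. Q c \<and> z \<in> set c}"
  proof clarify
    fix c assume c: "c \<in> Chs R" "Q c" "z \<notin> set c"
    have "\<forall>y\<in>set c. z < y"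
    proof
      fix y assume y: "y \<in> set c"
      then have "y \<in> R" "y \<noteq> z" using c unfolding Chs_def by auto
      then show "z < y" using z(1) by (simp add: order.strict_iff_order)
    qed
    then show "z # c \<in> Chs R \<and> Q (z # c) \<and> z \<in> set (z # c)" using c z Q unfolding Chs_def by auto
  qed
  show "{c \<in> Chs R. Q c \<and> z \<in> set c} \<subseteq> (Cons z) ` {c \<in> Chs R. Q c \<and> z \<notin> set c}"
  proof clarify
    fix c assume c: "c \<in> Chs R" "Q c" "z \<in> set c"
    then obtain d c' where dc: "c = d # c'" by (cases c) auto
    have s: "sorted_wrt (<) (d # c')" "set (d # c') \<subseteq> R" using c dc unfolding Chs_def by auto
    have "d = z"
    proof (rule ccontr)
      assume "d \<noteq> z"
      then have "z \<in> set c'" using c dc by auto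
      then have "d < z" using s by auto
      moreover have "z \<le> d" using z s by auto
      ultimately show False by simp
    qed
    then have "z \<notin> set c'" using s by auto
    moreover have "c' \<in> Chs R" using s unfolding Chs_def by auto
    moreover have "Q c'" using c dc \<open>d = z\<close> Q by simp
    ultimately show "c \<in> (Cons z) ` {c \<in> Chs R. Q c \<and> z \<notin> set c}" using dc \<open>d = z\<close> by blast
  qed
qed

lemma sign_cancel_min:
  assumes fin: "finite R" and z: "\<forall>y\<in>R. z \<le> y" "z \<in> R" and Q: "\<And>c. Q (z # c) = Q c"
  shows "(\<Sum>c\<in>{c \<in> Chs R. Q c}. (-1::int) ^ length c) = 0"
proof -
  let ?S1 = "{c \<in> Chs R. Q c \<and> z \<notin> set c}" and ?S2 = "{c \<in> Chs R. Q c \<and> z \<in> set c}"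
  have fS: "finite ?S1" "finite ?S2" using finite_Chs[OF fin] by auto
  have "{c \<in> Chs R. Q c} = ?S1 \<union> ?S2" by auto
  then have "(\<Sum>c\<in>{c \<in> Chs R. Q c}. (-1::int) ^ length c) = (\<Sum>c\<in>?S1. (-1::int) ^ length c) + (\<Sum>c\<in>?S2. (-1::int) ^ length c)"
    using fS by (simp add: sum.union_disjoint disjoint_iff)
  also have "(\<Sum>c\<in>?S2. (-1::int) ^ length c) = (\<Sum>c\<in>?S1. (-1::int) ^ length (z # c))"
    unfolding Cons_min_image[of R z Q, OF z Q] by (subst sum.reindex) (auto simp: inj_on_def)
  also have "\<dots> = - (\<Sum>c\<in>?S1. (-1::int) ^ length c)" by (simp add: sum_negf)
  finally show ?thesis by simp
qed

lemma snoc_max_image: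
  assumes t: "\<forall>y\<in>R. y \<le> t" "t \<in> R"
  shows "{c \<in> Chs R. t \<in> set c} = (\<lambda>c. c @ [t]) ` {c \<in> Chs R. t \<notin> set c}"
proof (rule equalityI)
  show "(\<lambda>c. c @ [t]) ` {c \<in> Chs R. t \<notin> set c} \<subseteq> {c \<in> Chs R. t \<in> set c}"
  proof clarify
    fix c assume c: "c \<in> Chs R" "t \<notin> set c"
    have "\<forall>y\<in>set c. y < t"
    proof
      fix y assume y: "y \<in> set c"
      then have "y \<in> R" "y \<noteq> t" using c unfolding Chs_def by auto
      then show "y < t" using t(1) by (simp add: order.strict_iff_order)
    qed
    then show "c @ [t] \<in> Chs R \<and> t \<in> set (c @ [t])" using c t unfolding Chs_def by (auto simp: sorted_wrt_append)
  qed
  show "{c \<in> Chs R. t \<in> set c} \<subseteq> (\<lambda>c. c @ [t]) ` {c \<in> Chs R. t \<notin> set c}"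
  proof clarify
    fix c assume c: "c \<in> Chs R" "t \<in> set c"
    then obtain c' d where dc: "c = c' @ [d]" by (cases c rule: rev_exhaust) auto
    have s: "sorted_wrt (<) (c' @ [d])" "set (c' @ [d]) \<subseteq> R" using c dc unfolding Chs_def by auto
    have s2: "\<forall>y\<in>set c'. y < d" using s(1) by (simp add: sorted_wrt_append)
    have "d = t"
    proof (rule ccontr)
      assume "d \<noteq> t"
      then have "t \<in> set c'" using c dc by auto
      then have "t < d" using s2 by auto
      moreover have "d \<le> t" using t s by auto
      ultimately show False by simp
    qed
    then have "t \<notin> set c'" using s2 by auto
    moreover have "c' \<in> Chs R" using s unfolding Chs_def by (auto simp: sorted_wrt_append)
    ultimately show "c \<in> (\<lambda>c. c @ [t]) ` {c \<in> Chs R. t \<notin> set c}" using dc \<open>d = t\<close> by blast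
  qed
qed

lemma chi_max:
  assumes fin: "finite R" and t: "\<forall>y\<in>R. y \<le> t" "t \<in> R"
  shows "chi R = 1"
proof -
  let ?S1 = "{c \<in> Chs R. t \<notin> set c}" and ?S2 = "{c \<in> Chs R. t \<in> set c}"
  have fS: "finite ?S1" "finite ?S2" using finite_Chs[OF fin] by auto
  have U: "?S1 \<union> ?S2 = Chs R" by auto
  have "(\<Sum>c\<in>?S1 \<union> ?S2. (-1::int) ^ length c) = (\<Sum>c\<in>?S1. (-1::int) ^ length c) + (\<Sum>c\<in>?S2. (-1::int) ^ length c)"
    by (rule sum.union_disjoint[OF fS]) auto
  then have "(\<Sum>c\<in>Chs R. (-1::int) ^ length c) = (\<Sum>c\<in>?S1. (-1::int) ^ length c) + (\<Sum>c\<in>?S2. (-1::int) ^ length c)"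
    by (simp only: U)
  also have "(\<Sum>c\<in>?S2. (-1::int) ^ length c) = (\<Sum>c\<in>?S1. (-1::int) ^ length (c @ [t]))"
    unfolding snoc_max_image[OF t] by (subst sum.reindex) (auto simp: inj_on_def)
  also have "\<dots> = - (\<Sum>c\<in>?S1. (-1::int) ^ length c)" by (simp add: sum_negf)
  finally have "(\<Sum>c\<in>Chs R. (-1::int) ^ length c) = 0" by simp
  then show ?thesis using sign_sum_chi[OF fin] by simp
qed

lemma comb_main:
  fixes w :: "'a::order \<Rightarrow> 'r::comm_ring_1"
  assumes fin: "finite P" and z: "\<forall>y\<in>P. z \<le> y" "z \<in> P"
  shows "(\<Sum>c\<in>Chs P. - of_int ((-1)^length c) * (\<Sum>x\<in>set c. w x)) = w z * of_int (1 - chi (P - {z}))"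
proof -
  let ?s = "\<lambda>c. (-1::int) ^ length c"
  have fC: "finite (Chs P)" by (rule finite_Chs[OF fin])
  have "(\<Sum>c\<in>Chs P. - of_int (?s c) * (\<Sum>x\<in>set c. w x))
      = (\<Sum>c\<in>Chs P. \<Sum>x\<in>{x \<in> P. x \<in> set c}. - of_int (?s c) * w x)"
  proof (intro sum.cong refl)
    fix c assume "c \<in> Chs P"
    then have "{x \<in> P. x \<in> set c} = set c" unfolding Chs_def by auto
    then show "- of_int (?s c) * (\<Sum>x\<in>set c. w x) = (\<Sum>x\<in>{x \<in> P. x \<in> set c}. - of_int (?s c) * w x)"
      by (simp add: sum_distrib_left)
  qed
  also have "\<dots> = (\<Sum>x\<in>P. \<Sum>c\<in>{c \<in> Chs P. x \<in> set c}. - of_int (?s c) * w x)"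
    by (rule sum.swap_restrict[OF fC fin])
  also have "\<dots> = (\<Sum>x\<in>P. - w x * of_int (\<Sum>c\<in>{c \<in> Chs P. x \<in> set c}. ?s c))"
    by (simp add: sum_distrib_left sum_distrib_right mult.commute)
  also have "\<dots> = (\<Sum>x\<in>{z}. - w x * of_int (\<Sum>c\<in>{c \<in> Chs P. x \<in> set c}. ?s c))"
  proof (rule sum.mono_neutral_cong_right[OF fin])
    show "{z} \<subseteq> P" using z(2) by simp
    show "\<forall>x\<in>P - {z}. - w x * of_int (\<Sum>c\<in>{c \<in> Chs P. x \<in> set c}. ?s c) = 0"
    proof
      fix x assume x: "x \<in> P - {z}"
      have "(\<Sum>c\<in>{c \<in> Chs P. x \<in> set c}. ?s c) = 0"
        by (rule sign_cancel_min[OF fin z]) (use x in auto)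
      then show "- w x * of_int (\<Sum>c\<in>{c \<in> Chs P. x \<in> set c}. ?s c) = 0" by simp
    qed
  qed simp
  also have "\<dots> = - w z * of_int (\<Sum>c\<in>{c \<in> Chs P. z \<in> set c}. ?s c)" by simp
  also have "(\<Sum>c\<in>{c \<in> Chs P. z \<in> set c}. ?s c) = - (1 - chi (P - {z}))"
  proof -
    have eq: "{c \<in> Chs P. True \<and> z \<in> set c} = (Cons z) ` {c \<in> Chs P. True \<and> z \<notin> set c}"
      by (rule Cons_min_image[of P z "\<lambda>_. True", OF z]) simp
    have C: "{c \<in> Chs P. True \<and> z \<notin> set c} = Chs (P - {z})" unfolding Chs_def by auto
    have "(\<Sum>c\<in>{c \<in> Chs P. z \<in> set c}. ?s c) = (\<Sum>c\<in>Chs (P - {z}). ?s (z # c))"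
      using eq unfolding C by (simp, subst sum.reindex) (auto simp: inj_on_def)
    also have "\<dots> = - (\<Sum>c\<in>Chs (P - {z}). ?s c)" by (simp add: sum_negf)
    also have "\<dots> = - (1 - chi (P - {z}))" using sign_sum_chi[of "P - {z}"] fin by simp
    finally show ?thesis .
  qed
  finally show ?thesis by (simp add: algebra_simps)
qed


lemma height_mono:
  assumes fin: "finite P" and hf: "height_fun P h"
  shows "x \<in> P \<Longrightarrow> y \<in> P \<Longrightarrow> x < y \<Longrightarrow> h x < h y"
proof (induction "card {w \<in> P. x < w \<and> w < y}" arbitrary: x y rule: less_induct)
  case (less x y)
  show ?case
  proof (cases "covers P x y")
    case True then show ?thesis using hf unfolding height_fun_def by blast
  next
    case False
    then obtain w where w: "w \<in> P" "x < w" "w < y" using less.prems unfolding covers_def by blast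
    have "{w' \<in> P. x < w' \<and> w' < w} \<subset> {w' \<in> P. x < w' \<and> w' < y}"
      using w by (auto intro: order.strict_trans)
    then have c1: "card {w' \<in> P. x < w' \<and> w' < w} < card {w' \<in> P. x < w' \<and> w' < y}"
      by (rule psubset_card_mono[rotated]) (use fin in simp)
    have "{w' \<in> P. w < w' \<and> w' < y} \<subset> {w' \<in> P. x < w' \<and> w' < y}"
      using w by (auto intro: order.strict_trans)
    then have c2: "card {w' \<in> P. w < w' \<and> w' < y} < card {w' \<in> P. x < w' \<and> w' < y}"
      by (rule psubset_card_mono[rotated]) (use fin in simp)
    have "h x < h w" using less.hyps[OF c1] less.prems w by blast
    moreover have "h w < h y" using less.hyps[OF c2] less.prems w by blast
    ultimately show ?thesis by simp
  qed
qed

lemma term_value: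
  assumes fin: "finite P" and hf: "height_fun P h" and c: "c \<in> chains k P" and k: "k \<ge> 1"
  shows "poly (smult (qvar ^ (\<Sum>i<k. h (c ! i)))
        (pcompose (Epoly (map h c))
           [: - qint (k + 1) / qvar ^ (k + 1), 1 / qvar ^ (k + 1) :])) 0
     = - of_int ((-1) ^ length c) * (\<Sum>x\<in>set c. inverse (qvar ^ h x))"
proof -
  have lc: "length c = k" and sc: "sorted_wrt (<) c" and sP: "set c \<subseteq> P" using c unfolding chains_def by auto
  have "sorted_wrt (<) (map h c)"
    unfolding sorted_wrt_map by (rule sorted_wrt_mono_rel[OF _ sc]) (use sP height_mono[OF fin hf] in blast)
  then have dm: "distinct (map h c)" by (rule sorted_less_distinct)
  then have inj: "inj_on h (set c)" by (simp add: distinct_map)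
  have ne: "map h c \<noteq> []" using lc k by auto
  have lm: "k = length (map h c)" using lc by simp
  have S: "(\<Sum>i<k. h (c ! i)) = sum_list (map h c)"
    using lc by (simp add: sum_list_sum_nth atLeast0LessThan)
  have "poly (smult (qvar ^ (\<Sum>i<k. h (c ! i)))
        (pcompose (Epoly (map h c))
           [: - qint (k + 1) / qvar ^ (k + 1), 1 / qvar ^ (k + 1) :])) 0
     = qvar ^ (sum_list (map h c)) * poly (Epoly (map h c)) (poly [: - qint (k + 1) / qvar ^ (k + 1), 1 / qvar ^ (k + 1) :] 0)"
    unfolding S poly_smult poly_pcompose by simp
  also have "\<dots> = (-1)^(k-1) * (\<Sum>e\<in>set (map h c). inverse (qx e))"
    by (rule Epoly_at_point[OF dm ne lm])
  also have "(\<Sum>e\<in>set (map h c). inverse (qx e)) = (\<Sum>x\<in>set c. inverse (qvar ^ h x))"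
    using inj by (simp add: sum.reindex)
  also have "(-1::qfield)^(k-1) = - of_int ((-1) ^ length c)"
    using k lc by (cases k) auto
  finally show ?thesis .
qed

theorem mainTheorem13:
  fixes P :: "'a::order set" and h :: "'a \<Rightarrow> nat" and z :: 'a
  assumes "finite P"
    and "height_fun P h"
    and "z \<in> P" and "\<forall>x\<in>P. z \<le> x"
  shows "poly (qZeta P h) (qint 0) = inverse (qvar ^ h z) * (1 - of_int (chi (P - {z})))
     \<and> ((\<exists>t\<in>P. t \<noteq> z \<and> (\<forall>x\<in>P. x \<le> t)) \<longrightarrow> poly (qZeta P h) (qint 0) = 0)"
proof -
  let ?T = "\<lambda>c. - of_int ((-1::int) ^ length c) * (\<Sum>x\<in>set c. inverse (qvar ^ h x))"
  have q0: "qint 0 = 0" unfolding qint_def by simp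
  have "poly (qZeta P h) (qint 0) = (\<Sum>k\<in>{1..card P}. \<Sum>c\<in>chains k P. ?T c)"
    unfolding qZeta_def q0 poly_sum
  proof (intro sum.cong refl)
    fix k c assume kc: "k \<in> {1..card P}" "c \<in> chains k P"
    show "poly (smult (qvar ^ (\<Sum>i<k. h (c ! i)))
        (pcompose (Epoly (map h c))
           [: - qint (k + 1) / qvar ^ (k + 1), 1 / qvar ^ (k + 1) :])) 0 = ?T c"
      by (rule term_value[OF assms(1,2) kc(2)]) (use kc(1) in simp)
  qed
  also have "\<dots> = (\<Sum>k\<in>{0..card P}. \<Sum>c\<in>chains k P. ?T c)"
    by (subst (2) sum.atLeast_Suc_atMost) (simp_all add: chains0)
  also have "\<dots> = (\<Sum>c\<in>Chs P. ?T c)" by (rule sum_chains_len[OF assms(1)])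
  also have "\<dots> = inverse (qvar ^ h z) * of_int (1 - chi (P - {z}))"
    by (rule comb_main[OF assms(1) assms(4) assms(3)])
  finally have main: "poly (qZeta P h) (qint 0) = inverse (qvar ^ h z) * (1 - of_int (chi (P - {z})))" by simp
  moreover have "poly (qZeta P h) (qint 0) = 0" if ex: "\<exists>t\<in>P. t \<noteq> z \<and> (\<forall>x\<in>P. x \<le> t)"
  proof -
    obtain t where t: "t \<in> P" "t \<noteq> z" "\<forall>x\<in>P. x \<le> t" using ex by blast
    have "chi (P - {z}) = 1" by (rule chi_max) (use assms(1) t in auto)
    then show ?thesis using main by simp
  qed
  ultimately show ?thesis by blast
qed

end
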